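(* Let $X$ be a quandle, let $s=(x_1,\dots,x_n)\in X^n$, and let $1\le\alpha<\beta\le n$ with $x_\alpha=x_\beta$. Then the image in $S_n$ of the stabilizer of $s$ in $B_n$ contains the transposition $(\alpha\ \beta)$.
   Context: A quandle is a set $X$ with an operation $x^y$ such that $x\mapsto x^y$ is bijective for each $y$, $(z^x)^y=(z^y)^{x^y}$, and $x^x=x$. $B_n$ acts on $X^n$ from the right by $(\dots,x_i,x_{i+1},\dots)^{\sigma_i}=(\dots,x_{i+1},x_i^{x_{i+1}},\dots)$, and $B_n\to S_n$ sends $\sigma_i\mapsto(i\ i+1)$. *)

theory Defs
  imports Main "HOL-Combinatorics.Transposition"
begin

text \<open>A quandle structure on the type 'a, with q x y standing for x^y.\<close>
definition quandle :: "('a \<Rightarrow> 'a \<Rightarrow> 'a) \<Rightarrow> bool" where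
  "quandle q \<longleftrightarrow>
     (\<forall>y. bij (\<lambda>x. q x y)) \<and>
     (\<forall>x y z. q (q z x) y = q (q z y) (q x y)) \<and>
     (\<forall>x. q x x = x)"

text \<open>Braid words: a letter (i, True) is sigma_i, (i, False) is sigma_i inverse.
  Positions are 1-based; a word is a braid word in B_n if all indices satisfy 1 <= i < n.\<close>
definition braid_word :: "nat \<Rightarrow> (nat \<times> bool) list \<Rightarrow> bool" where
  "braid_word n w \<longleftrightarrow> (\<forall>(i, e) \<in> set w. 1 \<le> i \<and> i < n)"

text \<open>Right action of a generator on tuples (lists, 1-based position i is list index i-1).\<close>
fun gen_act :: "('a \<Rightarrow> 'a \<Rightarrow> 'a) \<Rightarrow> nat \<times> bool \<Rightarrow> 'a list \<Rightarrow> 'a list" where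
  "gen_act q (i, True) s = s[i - 1 := s ! i, i := q (s ! (i - 1)) (s ! i)]"
| "gen_act q (i, False) s = s[i - 1 := inv (\<lambda>x. q x (s ! (i - 1))) (s ! i), i := s ! (i - 1)]"

definition braid_act :: "('a \<Rightarrow> 'a \<Rightarrow> 'a) \<Rightarrow> (nat \<times> bool) list \<Rightarrow> 'a list \<Rightarrow> 'a list" where
  "braid_act q w s = fold (gen_act q) w s"

text \<open>Image in S_n (permutations of {1..n}, identity elsewhere): sigma_i maps to (i i+1).\<close>
definition braid_perm :: "(nat \<times> bool) list \<Rightarrow> nat \<Rightarrow> nat" where
  "braid_perm w = foldr (\<lambda>(i, e) p. p \<circ> transpose i (i + 1)) w id"

end

theory Submission
  imports Defs
begin

definition invw :: "(nat \<times> bool) list \<Rightarrow> (nat \<times> bool) list" where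
  "invw w = rev (map (\<lambda>(i, e). (i, \<not> e)) w)"

definition uw :: "nat \<Rightarrow> nat \<Rightarrow> (nat \<times> bool) list" where
  "uw m b = map (\<lambda>k. (k, True)) (rev [m..<b])"

lemma len_gen_act[simp]: "length (gen_act q g s) = length s"
  by (cases g; cases "snd g") auto

lemma len_fold[simp]: "length (fold (gen_act q) w s) = length s"
  by (induction w arbitrary: s) auto

lemma gen_inv:
  assumes "quandle q" "1 \<le> i" "i < length s"
  shows "gen_act q (i, \<not> e) (gen_act q (i, e) s) = s"
proof -
  have bij: "bij (\<lambda>x. q x y)" for y using assms(1) unfolding quandle_def by blast
  hence inj: "inj (\<lambda>x. q x y)" for y using bij_is_inj by blast
  have invx: "inv (\<lambda>x. q x y) (q z y) = z" for y z using inv_f_f[OF inj] by simp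
  have fx: "q (inv (\<lambda>x. q x y) z) y = z" for y z
    using surj_f_inv_f[OF bij_is_surj[OF bij]] by metis
  show ?thesis
  proof (cases e)
    case True
    then show ?thesis using assms
      by (auto simp: nth_list_update invx intro!: nth_equalityI)
  next
    case False
    then show ?thesis using assms
      by (auto simp: nth_list_update fx intro!: nth_equalityI)
  qed
qed

lemma fold_inv:
  assumes "quandle q" "\<forall>(i, e) \<in> set w. 1 \<le> i \<and> i < length s"
  shows "fold (gen_act q) (invw w) (fold (gen_act q) w s) = s"
  using assms(2)
proof (induction w arbitrary: s)
  case Nil
  then show ?case by (simp add: invw_def)
next
  case (Cons x w)
  obtain i e where x: "x = (i, e)" by force
  have "fold (gen_act q) (invw w) (fold (gen_act q) w (gen_act q x s)) = gen_act q x s"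
    using Cons by auto
  moreover have "invw (x # w) = invw w @ [(i, \<not> e)]" by (simp add: invw_def x)
  ultimately show ?case using gen_inv[OF assms(1)] Cons.prems x by auto
qed

lemma uw_act:
  assumes "1 \<le> m" "m \<le> b" "b \<le> length s"
  shows "fold (gen_act q) (uw m b) s ! (m - 1) = s ! (b - 1)
       \<and> (\<forall>j < m - 1. fold (gen_act q) (uw m b) s ! j = s ! j)"
  using assms
proof (induction "b - m" arbitrary: b s)
  case 0
  then show ?case by (simp add: uw_def)
next
  case (Suc d)
  then obtain c where b: "b = Suc c" and mc: "m \<le> c" by (cases b) auto
  have uw: "uw m (Suc c) = (c, True) # uw m c" by (simp add: uw_def mc)
  define s' where "s' = gen_act q (c, True) s"
  have l: "length s' = length s" by (simp add: s'_def)
  have IH: "fold (gen_act q) (uw m c) s' ! (m - 1) = s' ! (c - 1)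
       \<and> (\<forall>j < m - 1. fold (gen_act q) (uw m c) s' ! j = s' ! j)"
    using Suc.hyps(1)[of c s'] Suc.hyps(2) Suc.prems b mc l by auto
  have s1: "s' ! (c - 1) = s ! c" using Suc.prems b mc
    by (simp add: s'_def nth_list_update)
  have s2: "s' ! j = s ! j" if "j < c - 1" for j using that Suc.prems b mc
    by (simp add: s'_def nth_list_update)
  show ?case unfolding b using IH s1 s2 mc by (simp add: uw s'_def)
qed

lemma foldr_perm: "foldr (\<lambda>(i, e) p. p \<circ> transpose i (i + 1)) w p = p \<circ> braid_perm w"
  by (induction w arbitrary: p) (auto simp: braid_perm_def comp_assoc split: prod.splits)

lemma braid_perm_append: "braid_perm (w1 @ w2) = braid_perm w2 \<circ> braid_perm w1"
  by (induction w1) (auto simp: braid_perm_def comp_assoc split: prod.splits)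

lemma braid_perm_cons: "braid_perm ((i, e) # w) = braid_perm w \<circ> transpose i (i + 1)"
  by (simp add: braid_perm_def)

lemma braid_perm_nil: "braid_perm [] = id"
  by (simp add: braid_perm_def)

lemma transp3: "a < c \<Longrightarrow> transpose c (Suc c) \<circ> transpose a c \<circ> transpose c (Suc c) = transpose a (Suc c)"
  by (rule ext) (auto simp: transpose_def)

lemma perm_w:
  assumes "a < b"
  shows "braid_perm (uw (Suc a) b @ [(a, True)] @ invw (uw (Suc a) b)) = transpose a b"
proof -
  have "Suc a \<le> b" using assms by simp
  then show ?thesis
proof (induction b rule: dec_induct)
  case base
  then show ?case using assms by (simp add: uw_def invw_def braid_perm_cons braid_perm_nil)
next
  case (step c)
  have uw: "uw (Suc a) (Suc c) = (c, True) # uw (Suc a) c" using step by (simp add: uw_def)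
  have iv: "invw ((c, True) # uw (Suc a) c) = invw (uw (Suc a) c) @ [(c, False)]"
    by (simp add: invw_def)
  have "braid_perm (uw (Suc a) (Suc c) @ [(a, True)] @ invw (uw (Suc a) (Suc c)))
     = transpose c (Suc c) \<circ> braid_perm (uw (Suc a) c @ [(a, True)] @ invw (uw (Suc a) c)) \<circ> transpose c (Suc c)"
    unfolding uw iv
    by (simp add: braid_perm_append braid_perm_cons braid_perm_nil comp_assoc)
  also have "\<dots> = transpose a (Suc c)" using step transp3[of a c] by simp
  finally show ?case .
qed
qed

theorem lemma4p34:
  fixes q :: "'a \<Rightarrow> 'a \<Rightarrow> 'a" and s :: "'a list" and \<alpha> \<beta> :: nat
  assumes "quandle q"
    and "1 \<le> \<alpha>" and "\<alpha> < \<beta>" and "\<beta> \<le> length s"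
    and "s ! (\<alpha> - 1) = s ! (\<beta> - 1)"
  shows "\<exists>w. braid_word (length s) w \<and> braid_act q w s = s \<and> braid_perm w = transpose \<alpha> \<beta>"
proof -
  define u where "u = uw (Suc \<alpha>) \<beta>"
  define w where "w = u @ [(\<alpha>, True)] @ invw u"
  have su: "set u \<subseteq> {(k, True) | k. Suc \<alpha> \<le> k \<and> k < \<beta>}" by (auto simp: u_def uw_def)
  have su': "\<forall>(i, e) \<in> set u. 1 \<le> i \<and> i < length s" using su assms by auto
  have bw: "braid_word (length s) w"
    using su' assms unfolding braid_word_def w_def invw_def by auto
  define t where "t = fold (gen_act q) u s"
  have lt: "length t = length s" by (simp add: t_def)
  have t1: "t ! \<alpha> = s ! (\<beta> - 1)" and t2: "t ! (\<alpha> - 1) = s ! (\<alpha> - 1)"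
    using uw_act[of "Suc \<alpha>" \<beta> s q] assms by (auto simp: t_def u_def)
  have idem: "q x x = x" for x using assms(1) unfolding quandle_def by blast
  have fixt: "gen_act q (\<alpha>, True) t = t"
    using t1 t2 assms lt by (auto simp: idem intro!: nth_equalityI simp: nth_list_update)
  have act: "braid_act q w s = s"
    unfolding braid_act_def w_def
    using fold_inv[OF assms(1) su'] fixt by (simp add: t_def)
  have "braid_perm w = transpose \<alpha> \<beta>" using perm_w[OF assms(3)] by (simp add: w_def u_def)
  then show ?thesis using bw act by blast
qed

end
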